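(* Let $G=(V,E)$ be an $n$-node graph, let $e \ge 1$ be an integer, and let $\mathcal{C}$ be the output of $\mathbf{cluster}(G, e)$. Then there are at most $ne$ edges in $G$ with both endpoints unclustered in $\mathcal{C}$.
   Context: $G$ is an unweighted undirected graph. The procedure $\mathbf{cluster}(G,e)$ is: initialize $\mathcal{C} = \emptyset$ and unmark all nodes; while there is an unmarked node $u$ with at least $e-1$ unmarked neighbors, let $C$ be the set consisting of $u$ together with any $e-1$ of its unmarked neighbors, mark all nodes of $C$, and add $C$ to $\mathcal{C}$; finally return $\mathcal{C}$. Each $C \in \mathcal{C}$ is called a cluster; a node is clustered if it belongs to some cluster in $\mathcal{C}$ and unclustered otherwise. *)

theory Defs
  imports Main
begin

definition simple_graph :: "'a set \<Rightarrow> 'a set set \<Rightarrow> bool" where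
  "simple_graph V E \<longleftrightarrow> finite V \<and> (\<forall>x\<in>E. \<exists>u v. x = {u, v} \<and> u \<in> V \<and> v \<in> V \<and> u \<noteq> v)"

definition nbrs :: "'a set \<Rightarrow> 'a set set \<Rightarrow> 'a \<Rightarrow> 'a set" where
  "nbrs V E u = {v \<in> V. {u, v} \<in> E}"

text \<open>Reachable states of the while-loop of cluster(G,e): the current collection of clusters;
  the marked nodes are exactly the union of the clusters.\<close>
inductive cluster_reach :: "'a set \<Rightarrow> 'a set set \<Rightarrow> nat \<Rightarrow> 'a set set \<Rightarrow> bool"
  for V E e where
  start: "cluster_reach V E e {}"
| step: "\<lbrakk> cluster_reach V E e Cs; u \<in> V; u \<notin> \<Union>Cs;
           S \<subseteq> nbrs V E u - \<Union>Cs; card S = e - 1 \<rbrakk>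
         \<Longrightarrow> cluster_reach V E e (insert (insert u S) Cs)"

definition cluster_output :: "'a set \<Rightarrow> 'a set set \<Rightarrow> nat \<Rightarrow> 'a set set \<Rightarrow> bool" where
  "cluster_output V E e Cs \<longleftrightarrow> cluster_reach V E e Cs \<and>
     \<not> (\<exists>u\<in>V. u \<notin> \<Union>Cs \<and> e - 1 \<le> card (nbrs V E u - \<Union>Cs))"

end

theory Submission
  imports Defs
begin

theorem claim1:
  fixes V :: "'a set" and E :: "'a set set" and e :: nat and Cs :: "'a set set"
  assumes "simple_graph V E"
    and "e \<ge> 1"
    and "cluster_output V E e Cs"
  shows "card {x \<in> E. x \<subseteq> V - \<Union>Cs} \<le> card V * e"
proof -
  define U where "U = V - \<Union>Cs"
  have fV: "finite V" using assms(1) unfolding simple_graph_def by blast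
  have fU: "finite U" using fV U_def by auto
  have fN: "\<And>u. finite (nbrs V E u - \<Union>Cs)" using fV unfolding nbrs_def by auto
  have small: "\<And>u. u \<in> U \<Longrightarrow> card (nbrs V E u - \<Union>Cs) \<le> e"
  proof -
    fix u assume "u \<in> U"
    hence "u \<in> V" "u \<notin> \<Union>Cs" by (auto simp: U_def)
    hence "\<not> (e - 1 \<le> card (nbrs V E u - \<Union>Cs))"
      using assms(3) unfolding cluster_output_def by blast
    thus "card (nbrs V E u - \<Union>Cs) \<le> e" by linarith
  qed
  have sub: "{x \<in> E. x \<subseteq> V - \<Union>Cs} \<subseteq> (\<Union>u\<in>U. (\<lambda>v. {u,v}) ` (nbrs V E u - \<Union>Cs))"
  proof
    fix x assume x: "x \<in> {x \<in> E. x \<subseteq> V - \<Union>Cs}"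
    have xE: "x \<in> E" and xU: "x \<subseteq> U" using x U_def by auto
    have "\<exists>u v. x = {u, v} \<and> u \<in> V \<and> v \<in> V \<and> u \<noteq> v"
      using assms(1) xE unfolding simple_graph_def by (rule conjunct2[THEN bspec])
    then obtain u v where uv: "x = {u,v}" "u \<in> V" "v \<in> V" "u \<noteq> v"
      by blast
    have "u \<in> U" "v \<in> U" using xU uv by auto
    hence "u \<in> U" "v \<notin> \<Union>Cs" by (auto simp: U_def)
    moreover have "v \<in> nbrs V E u" using xE uv unfolding nbrs_def by auto
    ultimately show "x \<in> (\<Union>u\<in>U. (\<lambda>v. {u,v}) ` (nbrs V E u - \<Union>Cs))"
      using uv by blast
  qed
  have "card {x \<in> E. x \<subseteq> V - \<Union>Cs} \<le> card (\<Union>u\<in>U. (\<lambda>v. {u,v}) ` (nbrs V E u - \<Union>Cs))"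
  proof (rule card_mono[OF _ sub])
    show "finite (\<Union>u\<in>U. (\<lambda>v. {u,v}) ` (nbrs V E u - \<Union>Cs))"
      using fU fN by blast
  qed
  also have "\<dots> \<le> (\<Sum>u\<in>U. card ((\<lambda>v. {u,v}) ` (nbrs V E u - \<Union>Cs)))"
    using fU by (rule card_UN_le)
  also have "\<dots> \<le> (\<Sum>u\<in>U. e)"
  proof (rule sum_mono)
    fix u assume "u \<in> U"
    have "card ((\<lambda>v. {u,v}) ` (nbrs V E u - \<Union>Cs)) \<le> card (nbrs V E u - \<Union>Cs)"
      by (rule card_image_le[OF fN])
    thus "card ((\<lambda>v. {u,v}) ` (nbrs V E u - \<Union>Cs)) \<le> e" using small[OF \<open>u \<in> U\<close>] by linarith
  qed
  also have "\<dots> = card U * e" by simp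
  also have "\<dots> \<le> card V * e" using fV unfolding U_def by (intro mult_le_mono1 card_mono) auto
  finally show ?thesis .
qed

end
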